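(* If $\mathbb P(T(X)\ge 1-\alpha)>0$, then $\mathbb E[D^\mu(X)]>0$ for every $\mu\ge 0$.
   Context: Let $(X,Y)\sim P_{XY}$ on $\mathcal X\times\mathcal Y$, $\alpha\in(0,1)$, $\mathcal I$ a finite collection of subsets of $\mathcal Y$, $w:\mathcal I\to(0,B)$ a bounded positive weight. For $C\in\mathcal I$ let $p_C(x)=\mathbb P(Y\in C\mid X=x)$, $\ell_{x,C}(\mu)=w(C)p_C(x)+\mu(p_C(x)-(1-\alpha))$ for $\mu\ge0$, $\mathcal U_x(\mu)=\max_{C\in\mathcal I}\ell_{x,C}(\mu)$, $D^\mu(x)=\mathbb 1\{\mathcal U_x(\mu)\ge0\}$, and $T(x)=\max_{C\in\mathcal I}p_C(x)$. *)

theory Defs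
  imports "HOL-Probability.Probability"
begin

text \<open>The conditional law of Y given X = x is given by a Markov kernel K
(a regular conditional distribution); p_C(x) = P(Y \<in> C | X = x) = measure (K x) C.\<close>

definition pC :: "('x \<Rightarrow> 'y measure) \<Rightarrow> 'y set \<Rightarrow> 'x \<Rightarrow> real" where
  "pC K C x = measure (K x) C"

definition ell :: "('y set \<Rightarrow> real) \<Rightarrow> real \<Rightarrow> ('x \<Rightarrow> 'y measure) \<Rightarrow> 'x \<Rightarrow> 'y set \<Rightarrow> real \<Rightarrow> real" where
  "ell w \<alpha> K x C \<mu> = w C * pC K C x + \<mu> * (pC K C x - (1 - \<alpha>))"

definition U :: "'y set set \<Rightarrow> ('y set \<Rightarrow> real) \<Rightarrow> real \<Rightarrow> ('x \<Rightarrow> 'y measure) \<Rightarrow> 'x \<Rightarrow> real \<Rightarrow> real" where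
  "U I w \<alpha> K x \<mu> = Max ((\<lambda>C. ell w \<alpha> K x C \<mu>) ` I)"

definition D :: "'y set set \<Rightarrow> ('y set \<Rightarrow> real) \<Rightarrow> real \<Rightarrow> ('x \<Rightarrow> 'y measure) \<Rightarrow> real \<Rightarrow> 'x \<Rightarrow> real" where
  "D I w \<alpha> K \<mu> x = (if U I w \<alpha> K x \<mu> \<ge> 0 then 1 else 0)"

definition T :: "'y set set \<Rightarrow> ('x \<Rightarrow> 'y measure) \<Rightarrow> 'x \<Rightarrow> real" where
  "T I K x = Max ((\<lambda>C. pC K C x) ` I)"

end

theory Submission
  imports Defs
begin

theorem proposition5:
  fixes M :: "'w measure" and Mx :: "'x measure" and My :: "'y measure"
    and X :: "'w \<Rightarrow> 'x" and Y :: "'w \<Rightarrow> 'y"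
    and K :: "'x \<Rightarrow> 'y measure"
    and I :: "'y set set" and w :: "'y set \<Rightarrow> real" and B \<alpha> :: real
  assumes "prob_space M"
    and X_rv: "X \<in> M \<rightarrow>\<^sub>M Mx" and Y_rv: "Y \<in> M \<rightarrow>\<^sub>M My"
    and K_kernel: "K \<in> Mx \<rightarrow>\<^sub>M prob_algebra My"
    and K_cond: "\<And>A C. A \<in> sets Mx \<Longrightarrow> C \<in> sets My \<Longrightarrow>
        measure M {\<omega> \<in> space M. X \<omega> \<in> A \<and> Y \<omega> \<in> C}
          = (\<integral>x. indicator A x * measure (K x) C \<partial>(distr M Mx X))"
    and "\<alpha> \<in> {0<..<1}"
    and "finite I" and "I \<noteq> {}" and "I \<subseteq> sets My"
    and "\<And>C. C \<in> I \<Longrightarrow> 0 < w C \<and> w C < B"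
    and "measure M {\<omega> \<in> space M. T I K (X \<omega>) \<ge> 1 - \<alpha>} > 0"
  shows "\<forall>\<mu>\<ge>0. (\<integral>\<omega>. D I w \<alpha> K \<mu> (X \<omega>) \<partial>M) > 0"
proof (intro allI impI)
  fix \<mu> :: real assume mu: "\<mu> \<ge> 0"
  interpret P: prob_space M by fact
  define S where "S = {\<omega> \<in> space M. T I K (X \<omega>) \<ge> 1 - \<alpha>}"
  have Spos: "measure M S > 0" using assms(11) by (simp add: S_def)
  have pm: "(\<lambda>x. pC K C x) \<in> borel_measurable Mx" if "C \<in> I" for C
  proof -
    have "C \<in> sets My" using that assms(9) by auto
    then have "(\<lambda>m. measure m C) \<in> prob_algebra My \<rightarrow>\<^sub>M borel"
      by (rule measurable_measure_prob_algebra)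
    then show ?thesis unfolding pC_def using K_kernel by (rule measurable_compose[rotated])
  qed
  have Um: "(\<lambda>x. U I w \<alpha> K x \<mu>) \<in> borel_measurable Mx"
    unfolding U_def ell_def
    by (rule borel_measurable_Max[OF assms(7)]) (use pm in measurable)
  have Dm: "(\<lambda>x. D I w \<alpha> K \<mu> x) \<in> borel_measurable Mx"
    unfolding D_def using Um by measurable
  have DXm: "(\<lambda>\<omega>. D I w \<alpha> K \<mu> (X \<omega>)) \<in> borel_measurable M"
    using measurable_compose[OF X_rv Dm] .
  have Tm: "(\<lambda>x. T I K x) \<in> borel_measurable Mx"
    unfolding T_def by (rule borel_measurable_Max[OF assms(7)]) (use pm in auto)
  have Ssets: "S \<in> sets M"
  proof -
    have "(\<lambda>\<omega>. T I K (X \<omega>)) \<in> borel_measurable M" using measurable_compose[OF X_rv Tm] .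
    then show ?thesis unfolding S_def by measurable
  qed
  have key: "D I w \<alpha> K \<mu> x = 1" if "T I K x \<ge> 1 - \<alpha>" for x
  proof -
    have "T I K x \<in> (\<lambda>C. pC K C x) ` I" unfolding T_def
      using assms(7,8) by (intro Max_in) auto
    then obtain C where C1: "C \<in> I" and Ceq: "T I K x = pC K C x" by auto
    have C: "C \<in> I" "pC K C x \<ge> 1 - \<alpha>" using C1 Ceq that by auto
    have "pC K C x \<ge> 0" by (simp add: pC_def)
    moreover have "w C > 0" using assms(10) C(1) by auto
    ultimately have "ell w \<alpha> K x C \<mu> \<ge> 0" unfolding ell_def using C(2) mu
      by (intro add_nonneg_nonneg mult_nonneg_nonneg) auto
    moreover have "ell w \<alpha> K x C \<mu> \<le> U I w \<alpha> K x \<mu>"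
      unfolding U_def using assms(7) C(1) by (intro Max_ge) auto
    ultimately show ?thesis unfolding D_def by auto
  qed
  have "measure M S = (\<integral>\<omega>. indicator S \<omega> \<partial>M)" using Ssets by simp
  also have "\<dots> \<le> (\<integral>\<omega>. D I w \<alpha> K \<mu> (X \<omega>) \<partial>M)"
  proof (rule integral_mono)
    show "integrable M (indicator S :: 'w \<Rightarrow> real)" using Ssets by (simp add: P.emeasure_eq_measure)
    show "integrable M (\<lambda>\<omega>. D I w \<alpha> K \<mu> (X \<omega>))"
      by (rule P.integrable_const_bound[where B=1]) (use DXm in \<open>auto simp: D_def\<close>)
    fix \<omega> assume "\<omega> \<in> space M"
    then show "indicator S \<omega> \<le> D I w \<alpha> K \<mu> (X \<omega>)"
      using key[of "X \<omega>"] by (auto simp: indicator_def S_def D_def split: if_splits)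
  qed
  finally show "(\<integral>\<omega>. D I w \<alpha> K \<mu> (X \<omega>) \<partial>M) > 0" using Spos by linarith
qed

end
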